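(* Let $N$ and $N_k$ be integers with $1\le N_k\le N$. For a vector $\boldsymbol{\zeta}_k=(\boldsymbol{\zeta}_k[1],\dots,\boldsymbol{\zeta}_k[N_k])$ of $N_k$ pairwise distinct elements of $\{1,\dots,N\}$, define its variance $$\bar{\boldsymbol\zeta}_k=\frac{1}{N_k}\sum_{n=1}^{N_k}\boldsymbol{\zeta}_k[n]^2-\frac{1}{N_k^2}\Big[\sum_{n=1}^{N_k}\boldsymbol{\zeta}_k[n]\Big]^2 .$$ Then, over all such vectors, $\bar{\boldsymbol\zeta}_k$ is maximized, and consequently the range Cramér–Rao bound $$\mathrm{CRB}(R)=\frac{c^2\sigma^2}{8|\beta|^2\pi^2 G_k N_k\Delta f^2\,\bar{\boldsymbol\zeta}_k}$$ is minimized, when the subcarriers are assigned according to the edge-first distribution.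
   Context: Here $c,\sigma,|\beta|,G_k,\Delta f$ are fixed positive constants (speed of light, noise standard deviation, magnitude of the path gain, number of sensing symbols, subcarrier spacing), so minimizing $\mathrm{CRB}(R)$ is equivalent to maximizing $\bar{\boldsymbol\zeta}_k$. The entries $\boldsymbol{\zeta}_k[n]$ are the indices of the subcarriers assigned to the user. The edge-first distribution is the one in which subcarriers nearest the two edges of the index range $\{1,\dots,N\}$ are preferentially assigned, i.e. the set of assigned indices is $\{1,\dots,a\}\cup\{N-b+1,\dots,N\}$ with $a+b=N_k$ and $|a-b|\le 1$ (e.g. for $N=48$, $N_k=16$: indices $1,\dots,8,41,\dots,48$). *)

theory Defs
  imports Complex_Main
begin

definition zeta_var :: "nat \<Rightarrow> (nat \<Rightarrow> nat) \<Rightarrow> real" where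
  "zeta_var Nk \<zeta> =
     (1 / real Nk) * (\<Sum>n = 1..Nk. (real (\<zeta> n))\<^sup>2)
     - (1 / (real Nk)\<^sup>2) * (\<Sum>n = 1..Nk. real (\<zeta> n))\<^sup>2"

definition CRB_range :: "real \<Rightarrow> real \<Rightarrow> real \<Rightarrow> real \<Rightarrow> nat \<Rightarrow> real \<Rightarrow> real \<Rightarrow> real" where
  "CRB_range c \<sigma> \<beta>abs G Nk \<Delta>f v =
     c\<^sup>2 * \<sigma>\<^sup>2 / (8 * \<beta>abs\<^sup>2 * pi\<^sup>2 * G * real Nk * \<Delta>f\<^sup>2 * v)"

definition edge_first_set :: "nat \<Rightarrow> nat \<Rightarrow> nat \<Rightarrow> nat set" where
  "edge_first_set N a b = {1..a} \<union> {N - b + 1..N}"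

end

theory Submission
  imports Defs
begin

definition Q :: "'a set \<Rightarrow> ('a \<Rightarrow> real) \<Rightarrow> real" where
  "Q I u = real (card I) * (\<Sum>i\<in>I. (u i)\<^sup>2) - (\<Sum>i\<in>I. u i)\<^sup>2"

lemma Q_pairs:
  assumes "finite I"
  shows "Q I u = (1/2) * (\<Sum>i\<in>I. \<Sum>j\<in>I. (u i - u j)\<^sup>2)"
proof -
  have "(\<Sum>i\<in>I. \<Sum>j\<in>I. (u i - u j)\<^sup>2)
     = (\<Sum>i\<in>I. \<Sum>j\<in>I. ((u i)\<^sup>2 + (u j)\<^sup>2) - 2 * (u i * u j))"
    by (simp add: power2_diff mult.assoc)
  also have "\<dots> = (\<Sum>i\<in>I. \<Sum>j\<in>I. ((u i)\<^sup>2 + (u j)\<^sup>2)) - 2 * (\<Sum>i\<in>I. \<Sum>j\<in>I. u i * u j)"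
    by (simp add: sum_subtractf sum_distrib_left)
  also have "(\<Sum>i\<in>I. \<Sum>j\<in>I. ((u i)\<^sup>2 + (u j)\<^sup>2)) = 2 * real (card I) * (\<Sum>i\<in>I. (u i)\<^sup>2)"
    by (simp add: sum.distrib sum_distrib_left[symmetric] sum_distrib_right[symmetric] sum_constant)
  also have "(\<Sum>i\<in>I. \<Sum>j\<in>I. u i * u j) = (\<Sum>i\<in>I. u i)\<^sup>2"
    by (simp add: power2_eq_square sum_product)
  finally show ?thesis unfolding Q_def by simp
qed

lemma Q_nonneg: "finite I \<Longrightarrow> Q I u \<ge> 0"
  by (simp add: Q_pairs sum_nonneg)

lemma Q_cong: assumes "\<And>i. i \<in> I \<Longrightarrow> u i = v i" shows "Q I u = Q I v"
proof -
  have "(\<Sum>i\<in>I. (u i)\<^sup>2) = (\<Sum>i\<in>I. (v i)\<^sup>2)" "sum u I = sum v I"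
    using assms by (auto intro: sum.cong)
  then show ?thesis unfolding Q_def by simp
qed

lemma Q_scale: "Q I (\<lambda>i. c * u i) = c\<^sup>2 * Q I u"
proof -
  have "(\<Sum>i\<in>I. (c * u i)\<^sup>2) = c\<^sup>2 * (\<Sum>i\<in>I. (u i)\<^sup>2)"
    by (simp add: power_mult_distrib sum_distrib_left)
  moreover have "(\<Sum>i\<in>I. c * u i) = c * (\<Sum>i\<in>I. u i)"
    by (simp add: sum_distrib_left)
  ultimately show ?thesis unfolding Q_def by (simp add: power_mult_distrib algebra_simps)
qed

lemma Q_reindex: "inj_on f A \<Longrightarrow> Q A (\<lambda>n. u (f n)) = Q (f ` A) u"
  unfolding Q_def by (simp add: sum.reindex card_image)

lemma sq_sum_le: "finite T \<Longrightarrow> (\<Sum>s\<in>T. z s)\<^sup>2 \<le> real (card T) * (\<Sum>s\<in>T. (z s)\<^sup>2)"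
  using Q_nonneg[of T z] unfolding Q_def by simp

lemma Q_jensen:
  assumes "finite I" "finite T"
  shows "Q I (\<lambda>i. \<Sum>s\<in>T. w s i) \<le> real (card T) * (\<Sum>s\<in>T. Q I (w s))"
proof -
  have "Q I (\<lambda>i. \<Sum>s\<in>T. w s i) = (1/2) * (\<Sum>i\<in>I. \<Sum>j\<in>I. (\<Sum>s\<in>T. w s i - w s j)\<^sup>2)"
    using assms by (simp add: Q_pairs sum_subtractf)
  also have "\<dots> \<le> (1/2) * (\<Sum>i\<in>I. \<Sum>j\<in>I. real (card T) * (\<Sum>s\<in>T. (w s i - w s j)\<^sup>2))"
    by (intro mult_left_mono sum_mono sq_sum_le assms) auto
  also have "\<dots> = real (card T) * (\<Sum>s\<in>T. Q I (w s))"
    using assms by (simp add: Q_pairs sum_distrib_left sum.swap[of _ T])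
  finally show ?thesis .
qed

definition edge :: "nat \<Rightarrow> nat \<Rightarrow> nat \<Rightarrow> nat" where
  "edge L a i = (if a < i then i + L else i)"

lemma gauss_real: "(\<Sum>i=1..n. real i) = real n * (real n + 1) / 2"
  by (induction n) (auto simp: field_simps)

lemma Q_edge:
  assumes "a \<le> K"
  shows "Q {1..K} (\<lambda>i. real (edge L a i))
       = Q {1..K} real + real a * real (K - a) * real L * (real L + real K)"
proof -
  define b where "b = K - a"
  have Kab: "real K = real a + real b" using assms b_def by simp
  have split: "{1..K} = {1..a} \<union> {a+1..K}" using assms by auto
  have disj: "{1..a} \<inter> {a+1..K} = {}" by auto
  have A: "(\<Sum>i=1..a. real i) = real a * (real a + 1) / 2" by (rule gauss_real)
  have AB: "(\<Sum>i=1..a. real i) + (\<Sum>i=a+1..K. real i) = real K * (real K + 1) / 2"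
    using gauss_real[of K] sum.union_disjoint[of "{1..a}" "{a+1..K}" real] split disj by simp
  have s1: "(\<Sum>i=1..K. real (edge L a i)) = (\<Sum>i=1..K. real i) + real b * real L"
  proof -
    have "(\<Sum>i=1..K. real (edge L a i)) = (\<Sum>i=1..a. real (edge L a i)) + (\<Sum>i=a+1..K. real (edge L a i))"
      using sum.union_disjoint[of "{1..a}" "{a+1..K}"] split disj by simp
    also have "\<dots> = (\<Sum>i=1..a. real i) + (\<Sum>i=a+1..K. real i + real L)"
      by (simp add: edge_def)
    also have "\<dots> = (\<Sum>i=1..a. real i) + (\<Sum>i=a+1..K. real i) + real b * real L"
      by (simp add: sum.distrib b_def)
    also have "\<dots> = (\<Sum>i=1..K. real i) + real b * real L"
      using sum.union_disjoint[of "{1..a}" "{a+1..K}" real] split disj by simp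
    finally show ?thesis .
  qed
  have s2: "(\<Sum>i=1..K. (real (edge L a i))\<^sup>2) = (\<Sum>i=1..K. (real i)\<^sup>2)
      + 2 * real L * (\<Sum>i=a+1..K. real i) + real b * (real L)\<^sup>2"
  proof -
    have "(\<Sum>i=1..K. (real (edge L a i))\<^sup>2) = (\<Sum>i=1..a. (real (edge L a i))\<^sup>2) + (\<Sum>i=a+1..K. (real (edge L a i))\<^sup>2)"
      using sum.union_disjoint[of "{1..a}" "{a+1..K}"] split disj by simp
    also have "\<dots> = (\<Sum>i=1..a. (real i)\<^sup>2) + (\<Sum>i=a+1..K. (real i)\<^sup>2 + 2 * real L * real i + (real L)\<^sup>2)"
      by (simp add: edge_def power2_sum algebra_simps)
    also have "\<dots> = (\<Sum>i=1..a. (real i)\<^sup>2) + (\<Sum>i=a+1..K. (real i)\<^sup>2) + 2 * real L * (\<Sum>i=a+1..K. real i) + real b * (real L)\<^sup>2"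
      by (simp add: sum.distrib b_def sum_distrib_left)
    also have "\<dots> = (\<Sum>i=1..K. (real i)\<^sup>2) + 2 * real L * (\<Sum>i=a+1..K. real i) + real b * (real L)\<^sup>2"
      using sum.union_disjoint[of "{1..a}" "{a+1..K}" "\<lambda>i. (real i)\<^sup>2"] split disj by simp
    finally show ?thesis .
  qed
  have B: "(\<Sum>i=a+1..K. real i) = real K * (real K + 1) / 2 - real a * (real a + 1) / 2"
    using A AB by linarith
  show ?thesis
    unfolding Q_def s1 s2 B gauss_real[of K] b_def[symmetric] using Kab
    by (simp add: algebra_simps power2_eq_square)
qed

lemma downclosed:
  fixes D :: "nat set"
  assumes "finite D" "D \<subseteq> {1..K}" and dc: "\<And>i j. j \<in> D \<Longrightarrow> 1 \<le> i \<Longrightarrow> i \<le> j \<Longrightarrow> i \<in> D"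
  shows "\<exists>a\<le>K. \<forall>i\<in>{1..K}. (i \<in> D \<longleftrightarrow> i \<le> a)"
proof (cases "D = {}")
  case True
  then show ?thesis by (intro exI[of _ 0]) auto
next
  case False
  have m: "Max D \<in> D" using False assms(1) by simp
  have mk: "Max D \<le> K" using m assms(2) by auto
  have "\<forall>i\<in>{1..K}. (i \<in> D \<longleftrightarrow> i \<le> Max D)"
  proof
    fix i :: nat assume i: "i \<in> {1..K}"
    show "i \<in> D \<longleftrightarrow> i \<le> Max D"
    proof
      assume "i \<in> D" then show "i \<le> Max D" using assms(1) by simp
    next
      assume "i \<le> Max D" then show "i \<in> D" using dc[OF m] i by simp
    qed
  qed
  then show ?thesis using mk by blast
qed
lemma ab_max:
  fixes a' K a b :: nat
  assumes "a' \<le> K" "a + b = K" "a \<le> b + 1" "b \<le> a + 1"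
  shows "a' * (K - a') \<le> a * b"
proof -
  define x where "x = int K - 2 * int a'"
  define y where "y = int a - int b"
  have y1: "y = 0 \<or> y = 1 \<or> y = -1" using assms y_def by linarith
  have h: "y\<^sup>2 \<le> x\<^sup>2"
  proof (cases "y = 0")
    case True then show ?thesis by simp
  next
    case False
    have "int K = int a + int b" using assms(2) by simp
    then have "x \<noteq> 0" using False y1 unfolding x_def y_def by presburger
    then have "1 \<le> \<bar>x\<bar>" by linarith
    then have "1 * 1 \<le> \<bar>x\<bar> * \<bar>x\<bar>" by (intro mult_mono) auto
    then have "1 \<le> x\<^sup>2" by (simp add: power2_eq_square)
    moreover have "y\<^sup>2 = 1" using y1 False by auto
    ultimately show ?thesis by simp
  qed
  have e1: "4 * (int a' * (int K - int a')) = (int K)\<^sup>2 - x\<^sup>2"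
    unfolding x_def by (simp add: power2_eq_square algebra_simps)
  have e2: "4 * (int a * int b) = (int K)\<^sup>2 - y\<^sup>2"
    unfolding y_def using assms(2) by (auto simp: power2_eq_square algebra_simps)
  have "int a' * (int K - int a') \<le> int a * int b" using e1 e2 h by linarith
  then have "int (a' * (K - a')) \<le> int (a * b)" using assms(1) by (simp add: of_nat_diff)
  then show ?thesis by linarith
qed


lemma count_sum:
  assumes "g \<le> (L::nat)"
  shows "(\<Sum>s<L. if s < g then c else (0::real)) = real g * c"
proof -
  have "(\<Sum>s<L. if s < g then c else (0::real)) = sum (\<lambda>_. c) {s\<in>{..<L}. s < g}"
    by (rule sum.inter_filter[symmetric]) simp
  also have "{s\<in>{..<L}. s < g} = {..<g}" using assms by auto
  finally show ?thesis by simp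
qed

lemma main_bound:
  fixes S :: "nat set"
  assumes SN: "S \<subseteq> {1..N}" and cS: "card S = K" and K1: "1 \<le> K"
    and ab: "a + b = K" "a \<le> b + 1" "b \<le> a + 1"
  shows "Q S real \<le> Q {1..K} (\<lambda>i. real (edge (N - K) a i))"
proof -
  have fin: "finite S" using cS K1 card_gt_0_iff by fastforce
  define l where "l = sorted_list_of_set S"
  have l: "sorted_wrt (<) l" "set l = S" "length l = K"
    using fin cS by (auto simp: l_def)
  define y where "y i = l ! (i - 1)" for i
  have mono: "y i < y j" if "i \<in> {1..K}" "j \<in> {1..K}" "i < j" for i j
    using that l sorted_wrt_nth_less[OF l(1), of "i - 1" "j - 1"] by (auto simp: y_def)
  have inS: "y i \<in> S" if "i \<in> {1..K}" for i
    using that l by (auto simp: y_def)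
  have img: "y ` {1..K} = S"
  proof
    show "y ` {1..K} \<subseteq> S" using inS by auto
    show "S \<subseteq> y ` {1..K}"
    proof
      fix x assume "x \<in> S"
      then obtain k where k: "k < K" "l ! k = x" using l by (metis in_set_conv_nth)
      then have "y (k + 1) = x" "k + 1 \<in> {1..K}" by (auto simp: y_def)
      then show "x \<in> y ` {1..K}" by force
    qed
  qed
  have inj: "inj_on y {1..K}"
  proof (rule inj_onI)
    fix i j assume "i \<in> {1..K}" "j \<in> {1..K}" "y i = y j"
    then show "i = j" using mono[of i j] mono[of j i] by (metis less_irrefl nat_neq_iff)
  qed
  have gap: "y i + d \<le> y (i + d)" if "1 \<le> i" "i + d \<le> K" for i d
    using that
  proof (induction d)
    case 0 then show ?case by simp
  next
    case (Suc d)
    then have "y i + d \<le> y (i + d)" by simp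
    moreover have "y (i + d) < y (i + Suc d)" using Suc.prems by (intro mono) auto
    ultimately show ?case by simp
  qed
  have y1: "1 \<le> y 1" using inS[of 1] SN K1 by auto
  have yK: "y K \<le> N" using inS[of K] SN K1 by auto
  define L where "L = N - K"
  define g where "g i = y i - i" for i
  have lo: "i \<le> y i" if "i \<in> {1..K}" for i
    using gap[of 1 "i - 1"] that y1 by auto
  have hi: "y i \<le> L + i" if "i \<in> {1..K}" for i
    using gap[of i "K - i"] that yK by (auto simp: L_def)
  have yg: "y i = i + g i" if "i \<in> {1..K}" for i using lo[OF that] by (simp add: g_def)
  have gL: "g i \<le> L" if "i \<in> {1..K}" for i using hi[OF that] by (simp add: g_def)
  have gmono: "g i \<le> g j" if "i \<in> {1..K}" "j \<in> {1..K}" "i \<le> j" for i j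
    using gap[of i "j - i"] that by (auto simp: g_def)
  have QS: "Q S real = Q {1..K} (\<lambda>i. real (y i))"
    using Q_reindex[OF inj, of real] img by simp
  define Qe where "Qe = Q {1..K} (\<lambda>i. real (edge L a i))"
  show ?thesis
  proof (cases "L = 0")
    case True
    have "Q {1..K} (\<lambda>i. real (y i)) = Qe" unfolding Qe_def
      by (rule Q_cong) (use True yg gL in \<open>auto simp: edge_def\<close>)
    then show ?thesis using QS by (simp add: Qe_def L_def)
  next
    case False
    then have Lpos: "L > 0" by simp
    define A where "A s = (SOME a. a \<le> K \<and> (\<forall>i\<in>{1..K}. (i \<in> {i\<in>{1..K}. g i \<le> s} \<longleftrightarrow> i \<le> a)))" for s
    have A: "A s \<le> K \<and> (\<forall>i\<in>{1..K}. (i \<in> {i\<in>{1..K}. g i \<le> s} \<longleftrightarrow> i \<le> A s))" for s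
      unfolding A_def
    proof (rule someI_ex, rule downclosed)
      show "finite {i \<in> {1..K}. g i \<le> s}" by simp
      show "{i \<in> {1..K}. g i \<le> s} \<subseteq> {1..K}" by auto
      fix i j assume "j \<in> {i \<in> {1..K}. g i \<le> s}" "1 \<le> i" "i \<le> j"
      then show "i \<in> {i \<in> {1..K}. g i \<le> s}" using gmono[of i j] by auto
    qed
    define w where "w s i = real (edge L (A s) i)" for s i
    have wsum: "(\<Sum>s<L. w s i) = real L * real (y i)" if i: "i \<in> {1..K}" for i
    proof -
      have "w s i = real i + (if s < g i then real L else 0)" for s
      proof -
        have "g i \<le> s \<longleftrightarrow> i \<le> A s" using A[of s] i by auto
        then show ?thesis by (auto simp: w_def edge_def)
      qed
      then have "(\<Sum>s<L. w s i) = (\<Sum>s<L. real i + (if s < g i then real L else 0))" by simp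
      also have "\<dots> = real L * real i + real (g i) * real L"
        by (simp add: sum.distrib count_sum[OF gL[OF i]])
      also have "\<dots> = real L * real (y i)" using yg[OF i] by (simp add: algebra_simps)
      finally show ?thesis .
    qed
    have wQ: "Q {1..K} (w s) \<le> Qe" for s
    proof -
      have "A s * (K - A s) \<le> a * b" using ab_max[of "A s" K a b] A[of s] ab by simp
      then have r: "real (A s) * real (K - A s) \<le> real a * real (K - a)"
        using ab by (metis add_diff_cancel_left' of_nat_le_iff of_nat_mult)
      have "a \<le> K" using ab by simp
      have r2: "real (A s) * real (K - A s) * (real L * (real L + real K))
          \<le> real a * real (K - a) * (real L * (real L + real K))"
        by (rule mult_right_mono[OF r]) simp
      show ?thesis
        unfolding w_def Qe_def using Q_edge[of "A s" K L] Q_edge[of a K L] A[of s] r2 \<open>a \<le> K\<close>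
        by (simp only: mult.assoc)
    qed
    have "(real L)\<^sup>2 * Q {1..K} (\<lambda>i. real (y i)) = Q {1..K} (\<lambda>i. \<Sum>s<L. w s i)"
      using Q_scale[of "{1..K}" "real L" "\<lambda>i. real (y i)"] Q_cong[of "{1..K}" "\<lambda>i. \<Sum>s<L. w s i" "\<lambda>i. real L * real (y i)"] wsum
      by simp
    also have "\<dots> \<le> real L * (\<Sum>s<L. Q {1..K} (w s))"
      using Q_jensen[of "{1..K}" "{..<L}" w] by simp
    also have "\<dots> \<le> real L * (\<Sum>s<L. Qe)"
      by (intro mult_left_mono sum_mono wQ) auto
    also have "\<dots> = (real L)\<^sup>2 * Qe" by (simp add: power2_eq_square)
    finally have "Q {1..K} (\<lambda>i. real (y i)) \<le> Qe" using Lpos by simp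
    then show ?thesis using QS by (simp add: Qe_def L_def)
  qed
qed

lemma zeta_var_Q:
  assumes "1 \<le> K"
  shows "zeta_var K f = Q {1..K} (\<lambda>n. real (f n)) / (real K)\<^sup>2"
  using assms unfolding zeta_var_def Q_def by (simp add: field_simps power2_eq_square)

lemma edge_inj: "inj_on (edge L a) A"
  by (rule inj_onI) (auto simp: edge_def split: if_splits)

lemma edge_img:
  assumes "a + b = K" "K \<le> N"
  shows "edge (N - K) a ` {1..K} = edge_first_set N a b"
proof
  show "edge (N - K) a ` {1..K} \<subseteq> edge_first_set N a b"
    using assms by (auto simp: edge_def edge_first_set_def)
  show "edge_first_set N a b \<subseteq> edge (N - K) a ` {1..K}"
  proof
    fix x assume x: "x \<in> edge_first_set N a b"
    show "x \<in> edge (N - K) a ` {1..K}"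
    proof (cases "x \<le> a")
      case True
      then have "x = edge (N - K) a x" "x \<in> {1..K}" using x assms by (auto simp: edge_def edge_first_set_def)
      then show ?thesis by blast
    next
      case False
      then have "x = edge (N - K) a (x - (N - K))" "x - (N - K) \<in> {1..K}"
        using x assms by (auto simp: edge_def edge_first_set_def)
      then show ?thesis by blast
    qed
  qed
qed

lemma Q_pos:
  fixes K :: nat and f :: "nat \<Rightarrow> nat"
  assumes "2 \<le> K" "inj_on f {1..K}"
  shows "Q {1..K} (\<lambda>n. real (f n)) > 0"
proof -
  let ?u = "\<lambda>n. real (f n)"
  have "f 1 \<noteq> f 2" using assms inj_on_contraD[of f "{1..K}" 1 2] by auto
  then have p: "0 < (?u 1 - ?u 2)\<^sup>2" by simp
  have "(?u 1 - ?u 2)\<^sup>2 \<le> (\<Sum>j\<in>{1..K}. (?u 1 - ?u j)\<^sup>2)"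
    by (rule member_le_sum[of 2 "{1..K}" "\<lambda>j. (?u 1 - ?u j)\<^sup>2"]) (use assms in auto)
  also have "\<dots> \<le> (\<Sum>i\<in>{1..K}. \<Sum>j\<in>{1..K}. (?u i - ?u j)\<^sup>2)"
    by (rule member_le_sum[of 1 "{1..K}" "\<lambda>i. \<Sum>j\<in>{1..K}. (?u i - ?u j)\<^sup>2"]) (use assms in \<open>auto intro: sum_nonneg\<close>)
  finally have "0 < (\<Sum>i\<in>{1..K}. \<Sum>j\<in>{1..K}. (?u i - ?u j)\<^sup>2)" using p by linarith
  then show ?thesis by (simp add: Q_pairs)
qed

theorem proposition2:
  fixes N Nk a b :: nat and \<zeta> \<zeta>e :: "nat \<Rightarrow> nat"
    and c \<sigma> \<beta>abs G \<Delta>f :: real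
  assumes "1 \<le> Nk" and "Nk \<le> N"
    and "inj_on \<zeta> {1..Nk}" and "\<zeta> ` {1..Nk} \<subseteq> {1..N}"
    and "a + b = Nk" and "a \<le> b + 1" and "b \<le> a + 1"
    and "inj_on \<zeta>e {1..Nk}" and "\<zeta>e ` {1..Nk} = edge_first_set N a b"
    and "c > 0" and "\<sigma> > 0" and "\<beta>abs > 0" and "G > 0" and "\<Delta>f > 0"
  shows "zeta_var Nk \<zeta> \<le> zeta_var Nk \<zeta>e
       \<and> CRB_range c \<sigma> \<beta>abs G Nk \<Delta>f (zeta_var Nk \<zeta>e)
           \<le> CRB_range c \<sigma> \<beta>abs G Nk \<Delta>f (zeta_var Nk \<zeta>)"
proof -
  have cS: "card (\<zeta> ` {1..Nk}) = Nk" using assms(3) by (simp add: card_image)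
  have Qz: "Q {1..Nk} (\<lambda>n. real (\<zeta> n)) = Q (\<zeta> ` {1..Nk}) real"
    using Q_reindex[OF assms(3), of real] by simp
  have Qze: "Q {1..Nk} (\<lambda>n. real (\<zeta>e n)) = Q {1..Nk} (\<lambda>i. real (edge (N - Nk) a i))"
    using Q_reindex[OF assms(8), of real] Q_reindex[OF edge_inj[of "N - Nk" a "{1..Nk}"], of real]
      assms(9) edge_img[OF assms(5) assms(2)] by simp
  have QQ: "Q {1..Nk} (\<lambda>n. real (\<zeta> n)) \<le> Q {1..Nk} (\<lambda>n. real (\<zeta>e n))"
    unfolding Qz Qze by (rule main_bound[OF assms(4) cS assms(1) assms(5-7)])
  have V: "zeta_var Nk \<zeta> \<le> zeta_var Nk \<zeta>e"
    unfolding zeta_var_Q[OF assms(1)] using QQ by (simp add: divide_right_mono)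
  define C where "C = c\<^sup>2 * \<sigma>\<^sup>2"
  define D where "D = 8 * \<beta>abs\<^sup>2 * pi\<^sup>2 * G * real Nk * \<Delta>f\<^sup>2"
  have Cp: "C > 0" using assms by (simp add: C_def)
  have Dp: "D > 0" using assms by (simp add: D_def)
  have crb: "CRB_range c \<sigma> \<beta>abs G Nk \<Delta>f v = C / (D * v)" for v
    by (simp add: CRB_range_def C_def D_def)
  have "CRB_range c \<sigma> \<beta>abs G Nk \<Delta>f (zeta_var Nk \<zeta>e) \<le> CRB_range c \<sigma> \<beta>abs G Nk \<Delta>f (zeta_var Nk \<zeta>)"
  proof (cases "Nk = 1")
    case True
    then show ?thesis unfolding crb by (simp add: zeta_var_def)
  next
    case False
    then have "2 \<le> Nk" using assms(1) by simp
    then have vp: "zeta_var Nk \<zeta> > 0"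
      unfolding zeta_var_Q[OF assms(1)] using Q_pos[OF _ assms(3)] assms(1) by simp
    show ?thesis unfolding crb
      by (rule divide_left_mono) (use V vp Cp Dp in \<open>auto intro: mult_left_mono\<close>)
  qed
  then show ?thesis using V by simp
qed
end
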